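(* Let $U_0, c_0, \rho_0 > 0$ and $\omega_f \in \mathbb{R}$ be constants and let $h$ be the Heaviside function. Let $f_1,\dots,f_4:\mathbb{R}\to\mathbb{R}$ be continuously differentiable, and $k_i,l_i,m_i$ ($i=1,\dots,4$) real numbers with $k_3k_4\neq 0$. Write $r_i = \sqrt{k_i^2+l_i^2+m_i^2}$, $\xi_i = k_ix+l_iy+m_iz$, and for $0\le\tau\le t$ set $a_1 = f_1[\xi_1 - (k_1U_0 - c_0r_1)(t-\tau)]$, $a_2 = f_2[\xi_2 - (k_2U_0+c_0r_2)(t-\tau)]$, $a_3 = f_3[\xi_3 - k_3U_0(t-\tau)]$, $a_4 = f_4[\xi_4 - k_4U_0(t-\tau)]$. Define $$v_x' = h(t)\int_0^t\Big(k_1 a_1 + k_2 a_2 + \tfrac{l_3}{k_3}a_3 + \tfrac{m_4}{k_4}a_4\Big)\sin\omega_f\tau\,d\tau,\quad v_y' = h(t)\int_0^t (l_1a_1 + l_2a_2 - a_3)\sin\omega_f\tau\,d\tau,$$ $$v_z' = h(t)\int_0^t (m_1a_1+m_2a_2-a_4)\sin\omega_f\tau\,d\tau,\quad p' = h(t)\int_0^t(-c_0\rho_0r_1a_1 + c_0\rho_0 r_2 a_2)\sin\omega_f\tau\,d\tau.$$ Then $(v_x',v_y',v_z',p')$ satisfies pointwise the system $$\partial_t v_x' + U_0\partial_x v_x' + \tfrac1{\rho_0}\partial_x p' = h(t)F\sin\omega_f t,\quad \partial_t v_y' + U_0\partial_x v_y' + \tfrac1{\rho_0}\partial_y p' = h(t)G\sin\omega_f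 t,$$ $$\partial_t v_z' + U_0\partial_x v_z' + \tfrac1{\rho_0}\partial_z p' = h(t)H\sin\omega_f t,\quad \partial_t p' + U_0\partial_x p' + \rho_0c_0^2(\partial_xv_x'+\partial_yv_y'+\partial_zv_z') = h(t)P\sin\omega_f t,$$ where $F = k_1f_1(\xi_1)+k_2f_2(\xi_2)+\frac{l_3}{k_3}f_3(\xi_3)+\frac{m_4}{k_4}f_4(\xi_4)$, $G = l_1f_1(\xi_1)+l_2f_2(\xi_2)-f_3(\xi_3)$, $H = m_1f_1(\xi_1)+m_2f_2(\xi_2)-f_4(\xi_4)$, $P = -c_0\rho_0r_1f_1(\xi_1)+c_0\rho_0r_2f_2(\xi_2)$.
   Context: This is the linearized 3D Euler system at a uniform flow $(U_0,0,0)$ forced by a permanent time-harmonic source with amplitude $(F,G,H,P)$ switched on at $t=0$. *)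

theory Defs
  imports "HOL-Analysis.Analysis"
begin

text \<open>Heaviside function (the value at 0 is irrelevant for the statement, since all
  fields vanish at t = 0 and the right-hand sides vanish there too).\<close>
definition heaviside :: "real \<Rightarrow> real" where
  "heaviside t = (if t \<ge> 0 then 1 else 0)"

definition has_pd_t :: "(real \<Rightarrow> real \<Rightarrow> real \<Rightarrow> real \<Rightarrow> real) \<Rightarrow> real \<Rightarrow> real \<Rightarrow> real \<Rightarrow> real \<Rightarrow> real \<Rightarrow> bool" where
  "has_pd_t u t x y z D \<longleftrightarrow> ((\<lambda>s. u s x y z) has_real_derivative D) (at t)"
definition has_pd_x :: "(real \<Rightarrow> real \<Rightarrow> real \<Rightarrow> real \<Rightarrow> real) \<Rightarrow> real \<Rightarrow> real \<Rightarrow> real \<Rightarrow> real \<Rightarrow> real \<Rightarrow> bool" where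
  "has_pd_x u t x y z D \<longleftrightarrow> ((\<lambda>s. u t s y z) has_real_derivative D) (at x)"
definition has_pd_y :: "(real \<Rightarrow> real \<Rightarrow> real \<Rightarrow> real \<Rightarrow> real) \<Rightarrow> real \<Rightarrow> real \<Rightarrow> real \<Rightarrow> real \<Rightarrow> real \<Rightarrow> bool" where
  "has_pd_y u t x y z D \<longleftrightarrow> ((\<lambda>s. u t x s z) has_real_derivative D) (at y)"
definition has_pd_z :: "(real \<Rightarrow> real \<Rightarrow> real \<Rightarrow> real \<Rightarrow> real) \<Rightarrow> real \<Rightarrow> real \<Rightarrow> real \<Rightarrow> real \<Rightarrow> real \<Rightarrow> bool" where
  "has_pd_z u t x y z D \<longleftrightarrow> ((\<lambda>s. u t x y s) has_real_derivative D) (at z)"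

end

theory Submission
  imports Defs
begin


lemma deriv_Un:
  assumes "(f has_real_derivative D) (at x within S)" "(f has_real_derivative D) (at x within T)"
  shows "(f has_real_derivative D) (at x within (S \<union> T))"
proof -
  have "((\<lambda>y. (f y - f x) / (y - x)) \<longlongrightarrow> D) (sup (at x within S) (at x within T))"
    using assms unfolding has_field_derivative_iff by (rule filterlim_sup)
  then show ?thesis by (subst has_field_derivative_iff) (simp add: at_within_union)
qed

lemma glue:
  assumes R: "\<And>t. t \<ge> 0 \<Longrightarrow> (F has_real_derivative D t) (at t within {0..})"
    and L: "\<And>t. t \<le> 0 \<Longrightarrow> (F has_real_derivative D t) (at t within {..0})"
  shows "(F has_real_derivative D t) (at t)"
proof (cases "t > 0")
  case True
  have "at t within {0..} = at t within UNIV"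
    by (rule at_within_nhd[where S="{0<..}"]) (use True in auto)
  then show ?thesis using R[of t] True by simp
next
  case False
  show ?thesis
  proof (cases "t < 0")
    case True
    have "at t within {..0} = at t within UNIV"
      by (rule at_within_nhd[where S="{..<0}"]) (use True in auto)
    then show ?thesis using L[of t] True by simp
  next
    case False
    with \<open>\<not> t > 0\<close> have t: "t = 0" by simp
    have "(F has_real_derivative D t) (at t within ({..0} \<union> {0..}))"
      using R[of t] L[of t] t by (intro deriv_Un) auto
    moreover have "{..0} \<union> {0..} = (UNIV::real set)" by auto
    ultimately show ?thesis by simp
  qed
qed

lemma QR:
  fixes q :: "real \<Rightarrow> real"
  assumes "continuous_on UNIV q" "t \<ge> 0"
  shows "((\<lambda>u. integral {0..u} q) has_real_derivative q t) (at t within {0..})"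
proof -
  have "((\<lambda>u. integral {0..u} q) has_real_derivative q t) (at t within {0..t+1})"
    using assms by (intro integral_has_real_derivative) (auto intro: continuous_on_subset)
  moreover have "at t within {0..t+1} = at t within {0..}"
    by (rule at_within_nhd[where S="{..<t+1}"]) auto
  ultimately show ?thesis by simp
qed

lemma QL:
  fixes q :: "real \<Rightarrow> real"
  assumes "t \<le> 0"
  shows "((\<lambda>u. integral {0..u} q) has_real_derivative 0) (at t within {..0})"
proof -
  have z: "integral {0..u} q = 0" if "u \<le> 0" for u
  proof (cases "u = 0")
    case True then show ?thesis by simp
  next
    case False then have "{0..u} = {}" using that by auto
    then show ?thesis by simp
  qed
  have "((\<lambda>u. 0::real) has_real_derivative 0) (at t within {..0})" by simp
  moreover have "eventually (\<lambda>u. 0 = integral {0..u} q) (at t within {..0})"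
    unfolding eventually_at_filter by (auto intro!: always_eventually z)
  ultimately show ?thesis
    using has_field_derivative_cong_eventually[of "\<lambda>u. 0" "\<lambda>u. integral {0..u} q" t "{..0}" 0]
      z[OF assms] by simp
qed

lemma subst_int:
  fixes h :: "real \<Rightarrow> real"
  shows "integral {0..t} (\<lambda>\<tau>. h (t - \<tau>)) = integral {0..t} h"
proof -
  have "integral {(-t)-(-t)..0-(-t)} (\<lambda>x. (\<lambda>x. h (-x)) (x + (-t))) = integral {-t..0} (\<lambda>x. h (-x))"
    by (rule integral_shift_real_ivl)
  also have "\<dots> = integral {0..t} h"
    using Henstock_Kurzweil_Integration.integral_reflect_real[of t 0 h] by simp
  finally show ?thesis by simp
qed

definition PHI :: "(real \<Rightarrow> real) \<Rightarrow> real \<Rightarrow> real \<Rightarrow> real \<Rightarrow> real \<Rightarrow> real" where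
  "PHI f s \<omega> t \<xi> = heaviside t * integral {0..t} (\<lambda>\<tau>. f (\<xi> - s*(t-\<tau>)) * sin (\<omega>*\<tau>))"

lemma int0:
  assumes "t \<le> 0" shows "integral {0..t} (g::real\<Rightarrow>real) = 0"
proof (cases "t = 0")
  case True then show ?thesis by simp
next
  case False then have "{0..t} = {}" using assms by auto
  then show ?thesis by simp
qed

lemma core:
  fixes f f' :: "real \<Rightarrow> real"
  assumes df: "\<And>v. (f has_real_derivative f' v) (at v)" and cf': "continuous_on UNIV f'"
  shows "\<exists>D. (PHI f s \<omega> t has_real_derivative D) (at \<xi>) \<and>
    ((\<lambda>t. PHI f s \<omega> t \<xi>) has_real_derivative (heaviside t * f \<xi> * sin (\<omega>*t) - s*D)) (at t)"
proof -
  have cf: "continuous_on UNIV f" using df by (meson DERIV_isCont continuous_at_imp_continuous_on)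
  define C where "C \<xi> t = integral {0..t} (\<lambda>u. f (\<xi> - s*u) * cos (\<omega>*u))" for \<xi> t
  define S where "S \<xi> t = integral {0..t} (\<lambda>u. f (\<xi> - s*u) * sin (\<omega>*u))" for \<xi> t
  define Cd where "Cd \<xi> t = integral {0..t} (\<lambda>u. f' (\<xi> - s*u) * cos (\<omega>*u))" for \<xi> t
  define Sd where "Sd \<xi> t = integral {0..t} (\<lambda>u. f' (\<xi> - s*u) * sin (\<omega>*u))" for \<xi> t
  have contg: "continuous_on A (\<lambda>u. f (\<xi> - s*u))" for \<xi> A
    by (intro continuous_on_compose2[OF cf] continuous_intros) auto
  have contg': "continuous_on A (\<lambda>u. f' (\<xi> - s*u))" for \<xi> A
    by (intro continuous_on_compose2[OF cf'] continuous_intros) auto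
  have E: "PHI f s \<omega> t \<xi> = sin (\<omega>*t) * C \<xi> t - cos (\<omega>*t) * S \<xi> t" for t \<xi>
  proof (cases "t \<ge> 0")
    case True
    have eq: "(\<lambda>\<tau>. f (\<xi> - s*(t-\<tau>)) * sin (\<omega>*\<tau>)) = (\<lambda>\<tau>. sin (\<omega>*t) * (f (\<xi> - s*(t-\<tau>)) * cos (\<omega>*(t-\<tau>)))
        - cos (\<omega>*t) * (f (\<xi> - s*(t-\<tau>)) * sin (\<omega>*(t-\<tau>))))"
    proof
      fix \<tau>
      have "sin (\<omega>*\<tau>) = sin (\<omega>*t - \<omega>*(t-\<tau>))" by (simp add: algebra_simps)
      also have "\<dots> = sin (\<omega>*t) * cos (\<omega>*(t-\<tau>)) - cos (\<omega>*t) * sin (\<omega>*(t-\<tau>))" by (rule sin_diff)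
      finally have ss: "sin (\<omega>*\<tau>) = sin (\<omega>*t) * cos (\<omega>*(t-\<tau>)) - cos (\<omega>*t) * sin (\<omega>*(t-\<tau>))" .
      show "f (\<xi> - s*(t-\<tau>)) * sin (\<omega>*\<tau>) = sin (\<omega>*t) * (f (\<xi> - s*(t-\<tau>)) * cos (\<omega>*(t-\<tau>)))
        - cos (\<omega>*t) * (f (\<xi> - s*(t-\<tau>)) * sin (\<omega>*(t-\<tau>)))"
        by (subst ss) (simp add: algebra_simps)
    qed
    have i1: "(\<lambda>\<tau>. sin (\<omega>*t) * (f (\<xi> - s*(t-\<tau>)) * cos (\<omega>*(t-\<tau>)))) integrable_on {0..t}"
      by (intro integrable_continuous_real continuous_intros continuous_on_compose2[OF cf]) auto
    have i2: "(\<lambda>\<tau>. cos (\<omega>*t) * (f (\<xi> - s*(t-\<tau>)) * sin (\<omega>*(t-\<tau>)))) integrable_on {0..t}"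
      by (intro integrable_continuous_real continuous_intros continuous_on_compose2[OF cf]) auto
    have "PHI f s \<omega> t \<xi> = integral {0..t} (\<lambda>\<tau>. sin (\<omega>*t) * (f (\<xi> - s*(t-\<tau>)) * cos (\<omega>*(t-\<tau>)))
        - cos (\<omega>*t) * (f (\<xi> - s*(t-\<tau>)) * sin (\<omega>*(t-\<tau>))))"
      using True unfolding PHI_def heaviside_def by (subst eq) simp
    also have "\<dots> = sin (\<omega>*t) * integral {0..t} (\<lambda>\<tau>. f (\<xi> - s*(t-\<tau>)) * cos (\<omega>*(t-\<tau>)))
        - cos (\<omega>*t) * integral {0..t} (\<lambda>\<tau>. f (\<xi> - s*(t-\<tau>)) * sin (\<omega>*(t-\<tau>)))"
      by (subst integral_diff[OF i1 i2]) simp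
    also have "\<dots> = sin (\<omega>*t) * C \<xi> t - cos (\<omega>*t) * S \<xi> t"
      using subst_int[where h="\<lambda>u. f (\<xi> - s*u) * cos (\<omega>*u)" and t=t] subst_int[where h="\<lambda>u. f (\<xi> - s*u) * sin (\<omega>*u)" and t=t]
      by (simp add: C_def S_def)
    finally show ?thesis .
  next
    case False
    then show ?thesis by (simp add: PHI_def heaviside_def C_def S_def int0)
  qed
  have dg: "((\<lambda>u. f (\<xi> - s*u)) has_real_derivative f' (\<xi> - s*u) * (-s)) (at u)" for \<xi> u
  proof -
    have i: "((\<lambda>u. \<xi> - s*u) has_real_derivative -s) (at u)"
      by (rule DERIV_cong[OF DERIV_diff[OF DERIV_const DERIV_cmult[OF DERIV_ident]]]) simp
    show ?thesis using DERIV_chain2[OF df i] by simp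
  qed
  have dx: "((\<lambda>x. f (x - s*u) * c) has_real_derivative f' (x - s*u) * c) (at x within UNIV)" for x u c
  proof -
    have i: "((\<lambda>x. x - s*u) has_real_derivative 1) (at x)"
      by (rule DERIV_cong[OF DERIV_diff[OF DERIV_ident DERIV_const]]) simp
    show ?thesis using DERIV_cmult_right[OF DERIV_chain2[OF df i], of c] by simp
  qed
  have Dxi: "(PHI f s \<omega> t has_real_derivative (sin (\<omega>*t) * Cd \<xi> t - cos (\<omega>*t) * Sd \<xi> t)) (at \<xi>)"
  proof -
    have cc: "continuous_on (UNIV \<times> {0..t}) (\<lambda>(x, u). f' (x - s*u) * g (\<omega>*u))" if "continuous_on UNIV g" for g
    proof -
      have "continuous_on (UNIV \<times> {0..t}) (\<lambda>z. f' (fst z - s * snd z) * g (\<omega> * snd z))"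
        by (intro continuous_intros continuous_on_compose2[OF cf'] continuous_on_compose2[OF that]) auto
      then show ?thesis by (simp add: split_beta)
    qed
    have L1: "((\<lambda>x. C x t) has_real_derivative Cd \<xi> t) (at \<xi>)"
      unfolding C_def Cd_def
      apply (rule leibniz_rule_field_derivative[where U=UNIV and a=0 and b=t and f="\<lambda>x u. f (x - s*u) * cos (\<omega>*u)" and fx="\<lambda>x u. f' (x - s*u) * cos (\<omega>*u)", unfolded cbox_interval])
        subgoal by (rule dx)
        subgoal by (intro integrable_continuous_real continuous_intros contg)
        subgoal by (intro cc continuous_intros)
        by auto
    have L2: "((\<lambda>x. S x t) has_real_derivative Sd \<xi> t) (at \<xi>)"
      unfolding S_def Sd_def
      apply (rule leibniz_rule_field_derivative[where U=UNIV and a=0 and b=t and f="\<lambda>x u. f (x - s*u) * sin (\<omega>*u)" and fx="\<lambda>x u. f' (x - s*u) * sin (\<omega>*u)", unfolded cbox_interval])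
        subgoal by (rule dx)
        subgoal by (intro integrable_continuous_real continuous_intros contg)
        subgoal by (intro cc continuous_intros)
        by auto
    have "PHI f s \<omega> t = (\<lambda>x. sin (\<omega>*t) * C x t - cos (\<omega>*t) * S x t)" using E by auto
    then show ?thesis by (simp only:) (rule DERIV_diff[OF DERIV_cmult[OF L1] DERIV_cmult[OF L2]])
  qed
  have Dt: "((\<lambda>t. PHI f s \<omega> t \<xi>) has_real_derivative \<omega>*(cos (\<omega>*t) * C \<xi> t + sin (\<omega>*t) * S \<xi> t)) (at t)"
  proof -
    have "(\<lambda>t. PHI f s \<omega> t \<xi>) = (\<lambda>t. sin (\<omega>*t) * C \<xi> t - cos (\<omega>*t) * S \<xi> t)" using E by auto
    moreover have "((\<lambda>t. sin (\<omega>*t) * C \<xi> t - cos (\<omega>*t) * S \<xi> t) has_real_derivative \<omega>*(cos (\<omega>*t) * C \<xi> t + sin (\<omega>*t) * S \<xi> t)) (at t)"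
    proof (rule glue)
      fix t :: real assume t: "t \<ge> 0"
      have c1: "((\<lambda>t. C \<xi> t) has_real_derivative f (\<xi> - s*t) * cos (\<omega>*t)) (at t within {0..})"
        unfolding C_def by (rule QR[OF _ t]) (intro continuous_intros contg)
      have s1: "((\<lambda>t. S \<xi> t) has_real_derivative f (\<xi> - s*t) * sin (\<omega>*t)) (at t within {0..})"
        unfolding S_def by (rule QR[OF _ t]) (intro continuous_intros contg)
      show "((\<lambda>t. sin (\<omega>*t) * C \<xi> t - cos (\<omega>*t) * S \<xi> t) has_real_derivative \<omega>*(cos (\<omega>*t) * C \<xi> t + sin (\<omega>*t) * S \<xi> t)) (at t within {0..})"
      proof -
        have sn: "((\<lambda>t. sin (\<omega>*t)) has_real_derivative cos (\<omega>*t)*\<omega>) (at t within {0..})" by (auto intro!: derivative_eq_intros)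
        have cs: "((\<lambda>t. cos (\<omega>*t)) has_real_derivative -sin (\<omega>*t)*\<omega>) (at t within {0..})" by (auto intro!: derivative_eq_intros)
        show ?thesis by (rule DERIV_cong[OF DERIV_diff[OF DERIV_mult'[OF sn c1] DERIV_mult'[OF cs s1]]]) (simp add: algebra_simps)
      qed
    next
      fix t :: real assume t: "t \<le> 0"
      have c1: "((\<lambda>t. C \<xi> t) has_real_derivative 0) (at t within {..0})"
        unfolding C_def by (rule QL[OF t])
      have s1: "((\<lambda>t. S \<xi> t) has_real_derivative 0) (at t within {..0})"
        unfolding S_def by (rule QL[OF t])
      show "((\<lambda>t. sin (\<omega>*t) * C \<xi> t - cos (\<omega>*t) * S \<xi> t) has_real_derivative \<omega>*(cos (\<omega>*t) * C \<xi> t + sin (\<omega>*t) * S \<xi> t)) (at t within {..0})"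
      proof -
        have sn: "((\<lambda>t. sin (\<omega>*t)) has_real_derivative cos (\<omega>*t)*\<omega>) (at t within {..0})" by (auto intro!: derivative_eq_intros)
        have cs: "((\<lambda>t. cos (\<omega>*t)) has_real_derivative -sin (\<omega>*t)*\<omega>) (at t within {..0})" by (auto intro!: derivative_eq_intros)
        show ?thesis by (rule DERIV_cong[OF DERIV_diff[OF DERIV_mult'[OF sn c1] DERIV_mult'[OF cs s1]]]) (simp add: algebra_simps)
      qed
    qed
    ultimately show ?thesis by simp
  qed
  have ibp: "s * Cd \<xi> t = f \<xi> - f (\<xi> - s*t) * cos (\<omega>*t) - \<omega> * S \<xi> t \<and>
             s * Sd \<xi> t = - f (\<xi> - s*t) * sin (\<omega>*t) + \<omega> * C \<xi> t" if t: "t \<ge> 0"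
  proof
    have "((\<lambda>u. f' (\<xi> - s*u) * (-s) * cos (\<omega>*u) + (- sin (\<omega>*u) * \<omega>) * f (\<xi> - s*u)) has_integral
        (f (\<xi> - s*t) * cos (\<omega>*t) - f (\<xi> - s*0) * cos (\<omega>*0))) {0..t}"
    proof (rule fundamental_theorem_of_calculus[OF t])
      fix u :: real
      have cs: "((\<lambda>u. cos (\<omega>*u)) has_real_derivative -sin (\<omega>*u)*\<omega>) (at u)" by (auto intro!: derivative_eq_intros)
      have "((\<lambda>u. f (\<xi> - s*u) * cos (\<omega>*u)) has_real_derivative f' (\<xi> - s*u) * (-s) * cos (\<omega>*u) + (- sin (\<omega>*u) * \<omega>) * f (\<xi> - s*u)) (at u)"
        by (rule DERIV_cong[OF DERIV_mult'[OF dg cs]]) (simp add: algebra_simps)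
      then show "((\<lambda>u. f (\<xi> - s*u) * cos (\<omega>*u)) has_vector_derivative f' (\<xi> - s*u) * (-s) * cos (\<omega>*u) + (- sin (\<omega>*u) * \<omega>) * f (\<xi> - s*u)) (at u within {0..t})"
        by (simp add: has_real_derivative_iff_has_vector_derivative[symmetric] has_field_derivative_at_within)
    qed
    then have "integral {0..t} (\<lambda>u. f' (\<xi> - s*u) * (-s) * cos (\<omega>*u) + (- sin (\<omega>*u) * \<omega>) * f (\<xi> - s*u))
       = f (\<xi> - s*t) * cos (\<omega>*t) - f \<xi>" by (simp add: integral_unique)
    moreover have "integral {0..t} (\<lambda>u. f' (\<xi> - s*u) * (-s) * cos (\<omega>*u) + (- sin (\<omega>*u) * \<omega>) * f (\<xi> - s*u))
       = - s * Cd \<xi> t - \<omega> * S \<xi> t"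
    proof -
      have "(\<lambda>u. f' (\<xi> - s*u) * (-s) * cos (\<omega>*u) + (- sin (\<omega>*u) * \<omega>) * f (\<xi> - s*u))
          = (\<lambda>u. (- s) * (f' (\<xi> - s*u) * cos (\<omega>*u)) - \<omega> * (f (\<xi> - s*u) * sin (\<omega>*u)))"
        by (auto simp: algebra_simps)
      moreover have "integral {0..t} (\<lambda>u. (- s) * (f' (\<xi> - s*u) * cos (\<omega>*u)) - \<omega> * (f (\<xi> - s*u) * sin (\<omega>*u)))
          = - s * Cd \<xi> t - \<omega> * S \<xi> t"
      proof -
        have ia: "(\<lambda>u. (- s) * (f' (\<xi> - s*u) * cos (\<omega>*u))) integrable_on {0..t}"
          by (intro integrable_continuous_real continuous_intros contg')
        have ib: "(\<lambda>u. \<omega> * (f (\<xi> - s*u) * sin (\<omega>*u))) integrable_on {0..t}"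
          by (intro integrable_continuous_real continuous_intros contg)
        show ?thesis unfolding Cd_def S_def by (subst integral_diff[OF ia ib]) simp
      qed
      ultimately show ?thesis by simp
    qed
    ultimately show "s * Cd \<xi> t = f \<xi> - f (\<xi> - s*t) * cos (\<omega>*t) - \<omega> * S \<xi> t" by linarith
  next
    have "((\<lambda>u. f' (\<xi> - s*u) * (-s) * sin (\<omega>*u) + (cos (\<omega>*u) * \<omega>) * f (\<xi> - s*u)) has_integral
        (f (\<xi> - s*t) * sin (\<omega>*t) - f (\<xi> - s*0) * sin (\<omega>*0))) {0..t}"
    proof (rule fundamental_theorem_of_calculus[OF t])
      fix u :: real
      have cs: "((\<lambda>u. sin (\<omega>*u)) has_real_derivative cos (\<omega>*u)*\<omega>) (at u)" by (auto intro!: derivative_eq_intros)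
      have "((\<lambda>u. f (\<xi> - s*u) * sin (\<omega>*u)) has_real_derivative f' (\<xi> - s*u) * (-s) * sin (\<omega>*u) + (cos (\<omega>*u) * \<omega>) * f (\<xi> - s*u)) (at u)"
        by (rule DERIV_cong[OF DERIV_mult'[OF dg cs]]) (simp add: algebra_simps)
      then show "((\<lambda>u. f (\<xi> - s*u) * sin (\<omega>*u)) has_vector_derivative f' (\<xi> - s*u) * (-s) * sin (\<omega>*u) + (cos (\<omega>*u) * \<omega>) * f (\<xi> - s*u)) (at u within {0..t})"
        by (simp add: has_real_derivative_iff_has_vector_derivative[symmetric] has_field_derivative_at_within)
    qed
    then have "integral {0..t} (\<lambda>u. f' (\<xi> - s*u) * (-s) * sin (\<omega>*u) + (cos (\<omega>*u) * \<omega>) * f (\<xi> - s*u))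
       = f (\<xi> - s*t) * sin (\<omega>*t)" by (simp add: integral_unique)
    moreover have "integral {0..t} (\<lambda>u. f' (\<xi> - s*u) * (-s) * sin (\<omega>*u) + (cos (\<omega>*u) * \<omega>) * f (\<xi> - s*u))
       = - s * Sd \<xi> t + \<omega> * C \<xi> t"
    proof -
      have "(\<lambda>u. f' (\<xi> - s*u) * (-s) * sin (\<omega>*u) + (cos (\<omega>*u) * \<omega>) * f (\<xi> - s*u))
          = (\<lambda>u. (- s) * (f' (\<xi> - s*u) * sin (\<omega>*u)) + \<omega> * (f (\<xi> - s*u) * cos (\<omega>*u)))"
        by (auto simp: algebra_simps)
      moreover have "integral {0..t} (\<lambda>u. (- s) * (f' (\<xi> - s*u) * sin (\<omega>*u)) + \<omega> * (f (\<xi> - s*u) * cos (\<omega>*u)))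
          = - s * Sd \<xi> t + \<omega> * C \<xi> t"
      proof -
        have ia: "(\<lambda>u. (- s) * (f' (\<xi> - s*u) * sin (\<omega>*u))) integrable_on {0..t}"
          by (intro integrable_continuous_real continuous_intros contg')
        have ib: "(\<lambda>u. \<omega> * (f (\<xi> - s*u) * cos (\<omega>*u))) integrable_on {0..t}"
          by (intro integrable_continuous_real continuous_intros contg)
        show ?thesis unfolding Sd_def C_def by (subst integral_add[OF ia ib]) simp
      qed
      ultimately show ?thesis by simp
    qed
    ultimately show "s * Sd \<xi> t = - f (\<xi> - s*t) * sin (\<omega>*t) + \<omega> * C \<xi> t" by linarith
  qed
  have val: "\<omega>*(cos (\<omega>*t) * C \<xi> t + sin (\<omega>*t) * S \<xi> t)
      = heaviside t * f \<xi> * sin (\<omega>*t) - s * (sin (\<omega>*t) * Cd \<xi> t - cos (\<omega>*t) * Sd \<xi> t)"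
  proof (cases "t \<ge> 0")
    case True
    have "s * (sin (\<omega>*t) * Cd \<xi> t - cos (\<omega>*t) * Sd \<xi> t) = sin (\<omega>*t) * (s * Cd \<xi> t) - cos (\<omega>*t) * (s * Sd \<xi> t)"
      by (simp add: algebra_simps)
    also have "\<dots> = sin (\<omega>*t) * (f \<xi> - f (\<xi> - s*t) * cos (\<omega>*t) - \<omega> * S \<xi> t)
        - cos (\<omega>*t) * (- f (\<xi> - s*t) * sin (\<omega>*t) + \<omega> * C \<xi> t)"
      using ibp[OF True] by simp
    finally have X: "s * (sin (\<omega>*t) * Cd \<xi> t - cos (\<omega>*t) * Sd \<xi> t) = sin (\<omega>*t) * (f \<xi> - f (\<xi> - s*t) * cos (\<omega>*t) - \<omega> * S \<xi> t)
        - cos (\<omega>*t) * (- f (\<xi> - s*t) * sin (\<omega>*t) + \<omega> * C \<xi> t)" .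
    show ?thesis using True unfolding X by (simp add: heaviside_def algebra_simps)
  next
    case False
    then show ?thesis by (simp add: heaviside_def C_def S_def Cd_def Sd_def int0)
  qed
  show ?thesis
  proof (intro exI conjI)
    show "(PHI f s \<omega> t has_real_derivative (sin (\<omega>*t) * Cd \<xi> t - cos (\<omega>*t) * Sd \<xi> t)) (at \<xi>)" by (rule Dxi)
    show "((\<lambda>t. PHI f s \<omega> t \<xi>) has_real_derivative heaviside t * f \<xi> * sin (\<omega>*t) - s * (sin (\<omega>*t) * Cd \<xi> t - cos (\<omega>*t) * Sd \<xi> t)) (at t)"
      using Dt unfolding val .
  qed
qed

lemma C1_real:
  assumes "f C1_differentiable_on UNIV"
  obtains f' where "\<And>v. (f has_real_derivative f' v) (at v)" "continuous_on UNIV f'"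
  using assms unfolding C1_differentiable_on_def has_real_derivative_iff_has_vector_derivative by blast

lemma cont_of_deriv:
  assumes "\<And>v. (f has_real_derivative f' v) (at v)" shows "continuous_on UNIV f"
  using assms by (meson DERIV_isCont continuous_at_imp_continuous_on)

lemma split4:
  fixes f1 f2 f3 f4 :: "real \<Rightarrow> real"
  assumes "continuous_on UNIV f1" "continuous_on UNIV f2" "continuous_on UNIV f3" "continuous_on UNIV f4"
  shows "heaviside t * integral {0..t} (\<lambda>\<tau>. (c1 * f1 (\<xi>1 - s1*(t-\<tau>)) + c2 * f2 (\<xi>2 - s2*(t-\<tau>))
      + c3 * f3 (\<xi>3 - s3*(t-\<tau>)) + c4 * f4 (\<xi>4 - s4*(t-\<tau>))) * sin (\<omega>*\<tau>))
    = c1 * PHI f1 s1 \<omega> t \<xi>1 + c2 * PHI f2 s2 \<omega> t \<xi>2 + c3 * PHI f3 s3 \<omega> t \<xi>3 + c4 * PHI f4 s4 \<omega> t \<xi>4"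
proof -
  have i: "(\<lambda>\<tau>. c * (g (\<xi> - s*(t-\<tau>)) * sin (\<omega>*\<tau>))) integrable_on {0..t}" if "continuous_on UNIV g" for g c \<xi> s
    by (intro integrable_continuous_real continuous_intros continuous_on_compose2[OF that]) auto
  have eq: "(\<lambda>\<tau>. (c1 * f1 (\<xi>1 - s1*(t-\<tau>)) + c2 * f2 (\<xi>2 - s2*(t-\<tau>))
      + c3 * f3 (\<xi>3 - s3*(t-\<tau>)) + c4 * f4 (\<xi>4 - s4*(t-\<tau>))) * sin (\<omega>*\<tau>))
    = (\<lambda>\<tau>. c1 * (f1 (\<xi>1 - s1*(t-\<tau>)) * sin (\<omega>*\<tau>)) + c2 * (f2 (\<xi>2 - s2*(t-\<tau>)) * sin (\<omega>*\<tau>))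
      + c3 * (f3 (\<xi>3 - s3*(t-\<tau>)) * sin (\<omega>*\<tau>)) + c4 * (f4 (\<xi>4 - s4*(t-\<tau>)) * sin (\<omega>*\<tau>)))"
    by (simp add: algebra_simps)
  note i1 = i[OF assms(1), of c1 \<xi>1 s1]
  note i2 = i[OF assms(2), of c2 \<xi>2 s2]
  note i3 = i[OF assms(3), of c3 \<xi>3 s3]
  note i4 = i[OF assms(4), of c4 \<xi>4 s4]
  show ?thesis
    unfolding eq PHI_def
    apply (subst integral_add[OF integrable_add[OF integrable_add[OF i1 i2] i3] i4])
    apply (subst integral_add[OF integrable_add[OF i1 i2] i3])
    apply (subst integral_add[OF i1 i2])
    apply (simp add: algebra_simps)
    done
qed

lemma pd_xyz:
  assumes d: "(PHI f s \<omega> t has_real_derivative D) (at (k*x+l*y+m*z))"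
  shows "((\<lambda>x'. PHI f s \<omega> t (k*x'+l*y+m*z)) has_real_derivative D*k) (at x)"
    and "((\<lambda>y'. PHI f s \<omega> t (k*x+l*y'+m*z)) has_real_derivative D*l) (at y)"
    and "((\<lambda>z'. PHI f s \<omega> t (k*x+l*y+m*z')) has_real_derivative D*m) (at z)"
proof -
  have "((\<lambda>x'. k*x'+l*y+m*z) has_real_derivative k) (at x)"
    by (rule DERIV_cong[OF DERIV_add[OF DERIV_add[OF DERIV_cmult[OF DERIV_ident] DERIV_const] DERIV_const]]) simp
  from DERIV_chain2[OF d this] show "((\<lambda>x'. PHI f s \<omega> t (k*x'+l*y+m*z)) has_real_derivative D*k) (at x)" .
  have "((\<lambda>y'. k*x+l*y'+m*z) has_real_derivative l) (at y)"
    by (rule DERIV_cong[OF DERIV_add[OF DERIV_add[OF DERIV_const DERIV_cmult[OF DERIV_ident]] DERIV_const]]) simp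
  from DERIV_chain2[OF d this] show "((\<lambda>y'. PHI f s \<omega> t (k*x+l*y'+m*z)) has_real_derivative D*l) (at y)" .
  have "((\<lambda>z'. k*x+l*y+m*z') has_real_derivative m) (at z)"
    by (rule DERIV_cong[OF DERIV_add[OF DERIV_const DERIV_cmult[OF DERIV_ident]]]) simp
  from DERIV_chain2[OF d this] show "((\<lambda>z'. PHI f s \<omega> t (k*x+l*y+m*z')) has_real_derivative D*m) (at z)" .
qed

theorem proposition7:
  fixes U0 c0 \<rho>0 \<omega> :: real
    and f1 f2 f3 f4 :: "real \<Rightarrow> real"
    and k1 k2 k3 k4 l1 l2 l3 l4 m1 m2 m3 m4 :: real
    and r1 r2 :: real
    and a1 a2 a3 a4 :: "real \<Rightarrow> real \<Rightarrow> real \<Rightarrow> real \<Rightarrow> real \<Rightarrow> real"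
    and vx vy vz p :: "real \<Rightarrow> real \<Rightarrow> real \<Rightarrow> real \<Rightarrow> real"
  assumes "U0 > 0" and "c0 > 0" and "\<rho>0 > 0"
    and "f1 C1_differentiable_on UNIV" and "f2 C1_differentiable_on UNIV"
    and "f3 C1_differentiable_on UNIV" and "f4 C1_differentiable_on UNIV"
    and "k3 * k4 \<noteq> 0"
    and "r1 = sqrt (k1\<^sup>2 + l1\<^sup>2 + m1\<^sup>2)"
    and "r2 = sqrt (k2\<^sup>2 + l2\<^sup>2 + m2\<^sup>2)"
    and "\<And>t x y z \<tau>. a1 t x y z \<tau> = f1 (k1*x + l1*y + m1*z - (k1*U0 - c0*r1) * (t - \<tau>))"
    and "\<And>t x y z \<tau>. a2 t x y z \<tau> = f2 (k2*x + l2*y + m2*z - (k2*U0 + c0*r2) * (t - \<tau>))"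
    and "\<And>t x y z \<tau>. a3 t x y z \<tau> = f3 (k3*x + l3*y + m3*z - k3*U0 * (t - \<tau>))"
    and "\<And>t x y z \<tau>. a4 t x y z \<tau> = f4 (k4*x + l4*y + m4*z - k4*U0 * (t - \<tau>))"
    and "\<And>t x y z. vx t x y z = heaviside t * integral {0..t} (\<lambda>\<tau>.
           (k1 * a1 t x y z \<tau> + k2 * a2 t x y z \<tau> + l3 / k3 * a3 t x y z \<tau>
            + m4 / k4 * a4 t x y z \<tau>) * sin (\<omega> * \<tau>))"
    and "\<And>t x y z. vy t x y z = heaviside t * integral {0..t} (\<lambda>\<tau>.
           (l1 * a1 t x y z \<tau> + l2 * a2 t x y z \<tau> - a3 t x y z \<tau>) * sin (\<omega> * \<tau>))"
    and "\<And>t x y z. vz t x y z = heaviside t * integral {0..t} (\<lambda>\<tau>.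
           (m1 * a1 t x y z \<tau> + m2 * a2 t x y z \<tau> - a4 t x y z \<tau>) * sin (\<omega> * \<tau>))"
    and "\<And>t x y z. p t x y z = heaviside t * integral {0..t} (\<lambda>\<tau>.
           (- c0 * \<rho>0 * r1 * a1 t x y z \<tau> + c0 * \<rho>0 * r2 * a2 t x y z \<tau>) * sin (\<omega> * \<tau>))"
  shows "\<forall>t x y z. \<exists>vxt vxx vyt vyx vyy vzt vzx vzz pt px py pz.
     has_pd_t vx t x y z vxt \<and> has_pd_x vx t x y z vxx \<and>
     has_pd_t vy t x y z vyt \<and> has_pd_x vy t x y z vyx \<and> has_pd_y vy t x y z vyy \<and>
     has_pd_t vz t x y z vzt \<and> has_pd_x vz t x y z vzx \<and> has_pd_z vz t x y z vzz \<and>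
     has_pd_t p t x y z pt \<and> has_pd_x p t x y z px \<and> has_pd_y p t x y z py \<and>
     has_pd_z p t x y z pz \<and>
     (let \<xi>1 = k1*x + l1*y + m1*z; \<xi>2 = k2*x + l2*y + m2*z;
          \<xi>3 = k3*x + l3*y + m3*z; \<xi>4 = k4*x + l4*y + m4*z;
          F = k1 * f1 \<xi>1 + k2 * f2 \<xi>2 + l3 / k3 * f3 \<xi>3 + m4 / k4 * f4 \<xi>4;
          G = l1 * f1 \<xi>1 + l2 * f2 \<xi>2 - f3 \<xi>3;
          H = m1 * f1 \<xi>1 + m2 * f2 \<xi>2 - f4 \<xi>4;
          P = - c0 * \<rho>0 * r1 * f1 \<xi>1 + c0 * \<rho>0 * r2 * f2 \<xi>2
      in vxt + U0 * vxx + px / \<rho>0 = heaviside t * F * sin (\<omega> * t) \<and>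
         vyt + U0 * vyx + py / \<rho>0 = heaviside t * G * sin (\<omega> * t) \<and>
         vzt + U0 * vzx + pz / \<rho>0 = heaviside t * H * sin (\<omega> * t) \<and>
         pt + U0 * px + \<rho>0 * c0\<^sup>2 * (vxx + vyy + vzz) = heaviside t * P * sin (\<omega> * t))"
proof (intro allI)
  fix t x y z
  obtain f1' where d1: "\<And>v. (f1 has_real_derivative f1' v) (at v)" and c1': "continuous_on UNIV f1'"
    using C1_real[OF assms(4)] by blast
  obtain f2' where d2: "\<And>v. (f2 has_real_derivative f2' v) (at v)" and c2': "continuous_on UNIV f2'"
    using C1_real[OF assms(5)] by blast
  obtain f3' where d3: "\<And>v. (f3 has_real_derivative f3' v) (at v)" and c3': "continuous_on UNIV f3'"
    using C1_real[OF assms(6)] by blast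
  obtain f4' where d4: "\<And>v. (f4 has_real_derivative f4' v) (at v)" and c4': "continuous_on UNIV f4'"
    using C1_real[OF assms(7)] by blast
  note cf1 = cont_of_deriv[OF d1] and cf2 = cont_of_deriv[OF d2]
    and cf3 = cont_of_deriv[OF d3] and cf4 = cont_of_deriv[OF d4]
  have k3: "k3 \<noteq> 0" and k4: "k4 \<noteq> 0" using assms(8) by auto
  have rho: "\<rho>0 \<noteq> 0" using assms(3) by simp
  have r1sq: "r1 * r1 = k1^2 + l1^2 + m1^2" using assms(9) by (simp add: abs_of_nonneg)
  have r2sq: "r2 * r2 = k2^2 + l2^2 + m2^2" using assms(10) by (simp add: abs_of_nonneg)
  have vx_eq: "\<And>t x y z. vx t x y z = k1 * PHI f1 (k1*U0 - c0*r1) \<omega> t (k1*x + l1*y + m1*z) + k2 * PHI f2 (k2*U0 + c0*r2) \<omega> t (k2*x + l2*y + m2*z) + (l3 / k3) * PHI f3 (k3*U0) \<omega> t (k3*x + l3*y + m3*z) + (m4 / k4) * PHI f4 (k4*U0) \<omega> t (k4*x + l4*y + m4*z)"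
    by (simp only: assms(15) assms(11-14)) (rule split4[OF cf1 cf2 cf3 cf4])
  have vy_eq: "\<And>t x y z. vy t x y z = l1 * PHI f1 (k1*U0 - c0*r1) \<omega> t (k1*x + l1*y + m1*z) + l2 * PHI f2 (k2*U0 + c0*r2) \<omega> t (k2*x + l2*y + m2*z) + (-1) * PHI f3 (k3*U0) \<omega> t (k3*x + l3*y + m3*z) + 0 * PHI f4 (k4*U0) \<omega> t (k4*x + l4*y + m4*z)"
  proof -
    fix t x y z
    have "heaviside t * integral {0..t} (\<lambda>\<tau>. (l1 * f1 (k1*x + l1*y + m1*z - (k1*U0 - c0*r1)*(t-\<tau>)) + l2 * f2 (k2*x + l2*y + m2*z - (k2*U0 + c0*r2)*(t-\<tau>)) + (-1) * f3 (k3*x + l3*y + m3*z - (k3*U0)*(t-\<tau>)) + 0 * f4 (k4*x + l4*y + m4*z - (k4*U0)*(t-\<tau>))) * sin (\<omega>*\<tau>)) = l1 * PHI f1 (k1*U0 - c0*r1) \<omega> t (k1*x + l1*y + m1*z) + l2 * PHI f2 (k2*U0 + c0*r2) \<omega> t (k2*x + l2*y + m2*z) + (-1) * PHI f3 (k3*U0) \<omega> t (k3*x + l3*y + m3*z) + 0 * PHI f4 (k4*U0) \<omega> t (k4*x + l4*y + m4*z)" by (rule split4[OF cf1 cf2 cf3 cf4])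
    then show "vy t x y z = l1 * PHI f1 (k1*U0 - c0*r1) \<omega> t (k1*x + l1*y + m1*z) + l2 * PHI f2 (k2*U0 + c0*r2) \<omega> t (k2*x + l2*y + m2*z) + (-1) * PHI f3 (k3*U0) \<omega> t (k3*x + l3*y + m3*z) + 0 * PHI f4 (k4*U0) \<omega> t (k4*x + l4*y + m4*z)" by (simp add: assms(16) assms(11-14))
  qed
  have vz_eq: "\<And>t x y z. vz t x y z = m1 * PHI f1 (k1*U0 - c0*r1) \<omega> t (k1*x + l1*y + m1*z) + m2 * PHI f2 (k2*U0 + c0*r2) \<omega> t (k2*x + l2*y + m2*z) + 0 * PHI f3 (k3*U0) \<omega> t (k3*x + l3*y + m3*z) + (-1) * PHI f4 (k4*U0) \<omega> t (k4*x + l4*y + m4*z)"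
  proof -
    fix t x y z
    have "heaviside t * integral {0..t} (\<lambda>\<tau>. (m1 * f1 (k1*x + l1*y + m1*z - (k1*U0 - c0*r1)*(t-\<tau>)) + m2 * f2 (k2*x + l2*y + m2*z - (k2*U0 + c0*r2)*(t-\<tau>)) + 0 * f3 (k3*x + l3*y + m3*z - (k3*U0)*(t-\<tau>)) + (-1) * f4 (k4*x + l4*y + m4*z - (k4*U0)*(t-\<tau>))) * sin (\<omega>*\<tau>)) = m1 * PHI f1 (k1*U0 - c0*r1) \<omega> t (k1*x + l1*y + m1*z) + m2 * PHI f2 (k2*U0 + c0*r2) \<omega> t (k2*x + l2*y + m2*z) + 0 * PHI f3 (k3*U0) \<omega> t (k3*x + l3*y + m3*z) + (-1) * PHI f4 (k4*U0) \<omega> t (k4*x + l4*y + m4*z)" by (rule split4[OF cf1 cf2 cf3 cf4])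
    then show "vz t x y z = m1 * PHI f1 (k1*U0 - c0*r1) \<omega> t (k1*x + l1*y + m1*z) + m2 * PHI f2 (k2*U0 + c0*r2) \<omega> t (k2*x + l2*y + m2*z) + 0 * PHI f3 (k3*U0) \<omega> t (k3*x + l3*y + m3*z) + (-1) * PHI f4 (k4*U0) \<omega> t (k4*x + l4*y + m4*z)" by (simp add: assms(17) assms(11-14))
  qed
  have p_eq: "\<And>t x y z. p t x y z = (- c0 * \<rho>0 * r1) * PHI f1 (k1*U0 - c0*r1) \<omega> t (k1*x + l1*y + m1*z) + (c0 * \<rho>0 * r2) * PHI f2 (k2*U0 + c0*r2) \<omega> t (k2*x + l2*y + m2*z) + 0 * PHI f3 (k3*U0) \<omega> t (k3*x + l3*y + m3*z) + 0 * PHI f4 (k4*U0) \<omega> t (k4*x + l4*y + m4*z)"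
  proof -
    fix t x y z
    have "heaviside t * integral {0..t} (\<lambda>\<tau>. ((- c0 * \<rho>0 * r1) * f1 (k1*x + l1*y + m1*z - (k1*U0 - c0*r1)*(t-\<tau>)) + (c0 * \<rho>0 * r2) * f2 (k2*x + l2*y + m2*z - (k2*U0 + c0*r2)*(t-\<tau>)) + 0 * f3 (k3*x + l3*y + m3*z - (k3*U0)*(t-\<tau>)) + 0 * f4 (k4*x + l4*y + m4*z - (k4*U0)*(t-\<tau>))) * sin (\<omega>*\<tau>)) = (- c0 * \<rho>0 * r1) * PHI f1 (k1*U0 - c0*r1) \<omega> t (k1*x + l1*y + m1*z) + (c0 * \<rho>0 * r2) * PHI f2 (k2*U0 + c0*r2) \<omega> t (k2*x + l2*y + m2*z) + 0 * PHI f3 (k3*U0) \<omega> t (k3*x + l3*y + m3*z) + 0 * PHI f4 (k4*U0) \<omega> t (k4*x + l4*y + m4*z)" by (rule split4[OF cf1 cf2 cf3 cf4])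
    then show "p t x y z = (- c0 * \<rho>0 * r1) * PHI f1 (k1*U0 - c0*r1) \<omega> t (k1*x + l1*y + m1*z) + (c0 * \<rho>0 * r2) * PHI f2 (k2*U0 + c0*r2) \<omega> t (k2*x + l2*y + m2*z) + 0 * PHI f3 (k3*U0) \<omega> t (k3*x + l3*y + m3*z) + 0 * PHI f4 (k4*U0) \<omega> t (k4*x + l4*y + m4*z)" by (simp add: assms(18) assms(11-14))
  qed
  obtain D1 where D1x: "(PHI f1 (k1*U0 - c0*r1) \<omega> t has_real_derivative D1) (at (k1*x + l1*y + m1*z))"
    and D1t: "((\<lambda>t. PHI f1 (k1*U0 - c0*r1) \<omega> t (k1*x + l1*y + m1*z)) has_real_derivative heaviside t * f1 (k1*x + l1*y + m1*z) * sin (\<omega>*t) - (k1*U0 - c0*r1) * D1) (at t)"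
    using core[OF d1 c1', of "(k1*U0 - c0*r1)" \<omega> t "k1*x + l1*y + m1*z"] by blast
  obtain D2 where D2x: "(PHI f2 (k2*U0 + c0*r2) \<omega> t has_real_derivative D2) (at (k2*x + l2*y + m2*z))"
    and D2t: "((\<lambda>t. PHI f2 (k2*U0 + c0*r2) \<omega> t (k2*x + l2*y + m2*z)) has_real_derivative heaviside t * f2 (k2*x + l2*y + m2*z) * sin (\<omega>*t) - (k2*U0 + c0*r2) * D2) (at t)"
    using core[OF d2 c2', of "(k2*U0 + c0*r2)" \<omega> t "k2*x + l2*y + m2*z"] by blast
  obtain D3 where D3x: "(PHI f3 (k3*U0) \<omega> t has_real_derivative D3) (at (k3*x + l3*y + m3*z))"
    and D3t: "((\<lambda>t. PHI f3 (k3*U0) \<omega> t (k3*x + l3*y + m3*z)) has_real_derivative heaviside t * f3 (k3*x + l3*y + m3*z) * sin (\<omega>*t) - (k3*U0) * D3) (at t)"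
    using core[OF d3 c3', of "(k3*U0)" \<omega> t "k3*x + l3*y + m3*z"] by blast
  obtain D4 where D4x: "(PHI f4 (k4*U0) \<omega> t has_real_derivative D4) (at (k4*x + l4*y + m4*z))"
    and D4t: "((\<lambda>t. PHI f4 (k4*U0) \<omega> t (k4*x + l4*y + m4*z)) has_real_derivative heaviside t * f4 (k4*x + l4*y + m4*z) * sin (\<omega>*t) - (k4*U0) * D4) (at t)"
    using core[OF d4 c4', of "(k4*U0)" \<omega> t "k4*x + l4*y + m4*z"] by blast
  note P1 = pd_xyz[OF D1x] and P2 = pd_xyz[OF D2x] and P3 = pd_xyz[OF D3x] and P4 = pd_xyz[OF D4x]
  note T = DERIV_add[OF DERIV_add[OF DERIV_add[OF DERIV_cmult[OF D1t] DERIV_cmult[OF D2t]] DERIV_cmult[OF D3t]] DERIV_cmult[OF D4t]]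
  note DX = DERIV_add[OF DERIV_add[OF DERIV_add[OF DERIV_cmult[OF P1(1)] DERIV_cmult[OF P2(1)]] DERIV_cmult[OF P3(1)]] DERIV_cmult[OF P4(1)]]
  note DY = DERIV_add[OF DERIV_add[OF DERIV_add[OF DERIV_cmult[OF P1(2)] DERIV_cmult[OF P2(2)]] DERIV_cmult[OF P3(2)]] DERIV_cmult[OF P4(2)]]
  note DZ = DERIV_add[OF DERIV_add[OF DERIV_add[OF DERIV_cmult[OF P1(3)] DERIV_cmult[OF P2(3)]] DERIV_cmult[OF P3(3)]] DERIV_cmult[OF P4(3)]]
  show "\<exists>vxt vxx vyt vyx vyy vzt vzx vzz pt px py pz.
     has_pd_t vx t x y z vxt \<and> has_pd_x vx t x y z vxx \<and>
     has_pd_t vy t x y z vyt \<and> has_pd_x vy t x y z vyx \<and> has_pd_y vy t x y z vyy \<and>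
     has_pd_t vz t x y z vzt \<and> has_pd_x vz t x y z vzx \<and> has_pd_z vz t x y z vzz \<and>
     has_pd_t p t x y z pt \<and> has_pd_x p t x y z px \<and> has_pd_y p t x y z py \<and>
     has_pd_z p t x y z pz \<and>
     (let \<xi>1 = k1*x + l1*y + m1*z; \<xi>2 = k2*x + l2*y + m2*z;
          \<xi>3 = k3*x + l3*y + m3*z; \<xi>4 = k4*x + l4*y + m4*z;
          F = k1 * f1 \<xi>1 + k2 * f2 \<xi>2 + l3 / k3 * f3 \<xi>3 + m4 / k4 * f4 \<xi>4;
          G = l1 * f1 \<xi>1 + l2 * f2 \<xi>2 - f3 \<xi>3;
          H = m1 * f1 \<xi>1 + m2 * f2 \<xi>2 - f4 \<xi>4;
          P = - c0 * \<rho>0 * r1 * f1 \<xi>1 + c0 * \<rho>0 * r2 * f2 \<xi>2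
      in vxt + U0 * vxx + px / \<rho>0 = heaviside t * F * sin (\<omega> * t) \<and>
         vyt + U0 * vyx + py / \<rho>0 = heaviside t * G * sin (\<omega> * t) \<and>
         vzt + U0 * vzx + pz / \<rho>0 = heaviside t * H * sin (\<omega> * t) \<and>
         pt + U0 * px + \<rho>0 * c0\<^sup>2 * (vxx + vyy + vzz) = heaviside t * P * sin (\<omega> * t))"
    unfolding has_pd_t_def has_pd_x_def has_pd_y_def has_pd_z_def vx_eq vy_eq vz_eq p_eq Let_def
    apply (intro exI conjI)
    apply (rule T[of k1 k2 "l3 / k3" "m4 / k4"])
    apply (rule DX[of k1 k2 "l3 / k3" "m4 / k4"])
    apply (rule T[of l1 l2 "-1" 0])
    apply (rule DX[of l1 l2 "-1" 0])
    apply (rule DY[of l1 l2 "-1" 0])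
    apply (rule T[of m1 m2 0 "-1"])
    apply (rule DX[of m1 m2 0 "-1"])
    apply (rule DZ[of m1 m2 0 "-1"])
    apply (rule T[of "- c0 * \<rho>0 * r1" "c0 * \<rho>0 * r2" 0 0])
    apply (rule DX[of "- c0 * \<rho>0 * r1" "c0 * \<rho>0 * r2" 0 0])
    apply (rule DY[of "- c0 * \<rho>0 * r1" "c0 * \<rho>0 * r2" 0 0])
    apply (rule DZ[of "- c0 * \<rho>0 * r1" "c0 * \<rho>0 * r2" 0 0])
    using k3 k4 rho
    apply (simp_all add: field_simps)
    apply (simp only: r1sq r2sq)
    apply (simp add: algebra_simps power2_eq_square)
    done
qed

end
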